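(* Fix an integer $M\ge 1$ and a real $\delta>0$. Then there is $T_0$ such that for every integer $T\ge T_0$, with $n=\left\lceil (1+\delta)\,\mathrm{e}\ln 2\,(M+1)^2\log_2 T\right\rceil$, there exists a code $(\mathbf{c}_1,\dots,\mathbf{c}_T)$ of $T$ binary words of length $n$ satisfying both of the following: (I) (identification) for every $t\in\{1,\dots,T\}$, every set $S\subseteq\{1,\dots,T\}\setminus\{t\}$ with $|S|\le M$, and every choice of shifts $s_u\in\{0,1,\dots,n-1\}$ ($u\in S$), the vector $\bigvee_{u\in S}\sigma_{s_u}(\mathbf{c}_u)$ does not cover $\mathbf{c}_t$; (S) (synchronization) for every $t\in\{1,\dots,T\}$, every $d\in\{1,\dots,n-1\}$, every set $S\subseteq\{1,\dots,T\}\setminus\{t\}$ with $|S|\le M-1$, and every choice of shifts $s_u\in\{0,1,\dots,n-1\}$ ($u\in S$), the vector $\sigma_d(\mathbf{c}_t)\vee\bigvee_{u\in S}\sigma_{s_u}(\mathbf{c}_u)$ does not cover $\mathbf{c}_t$. In other words, the minimum length $n_{\mathrm{asyn}}(T,M)$ of a code for asynchronous signature coding over the OR channel satisfies $n_{\mathrm{asyn}}(T,M)\lesssim \mathrm{e}\ln 2\,(M+1)^2\log_2 T$ as $T\to\infty$ with $M$ fixed.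
   Context: Binary vectors are elements of $\{0,1\}^n$; $\vee$ denotes the componentwise Boolean OR (an empty OR is the all-zero vector). A vector $\mathbf{y}=(y_1,\dots,y_n)$ covers $\mathbf{z}=(z_1,\dots,z_n)$ if $y_i\ge z_i$ for all $i$. For $\mathbf{c}\in\{0,1\}^n$ and an integer $s\in\{0,\dots,n-1\}$, the shifted vector $\sigma_s(\mathbf{c})\in\{0,1\}^n$ is defined by $(\sigma_s(\mathbf{c}))_i=c_{i-s}$ if $i>s$ and $(\sigma_s(\mathbf{c}))_i=0$ if $i\le s$. Logarithm $\log$ is base 2, $\ln$ is natural. *)

theory Defs
  imports "HOL-Analysis.Analysis"
begin

(* Binary vectors of length n are modelled as functions nat => bool, where only
   the coordinates 1..n are relevant (True = 1). *)

definition shiftv :: "nat \<Rightarrow> (nat \<Rightarrow> bool) \<Rightarrow> (nat \<Rightarrow> bool)" where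
  "shiftv s c = (\<lambda>i. s < i \<and> c (i - s))"

definition bigor :: "'a set \<Rightarrow> ('a \<Rightarrow> (nat \<Rightarrow> bool)) \<Rightarrow> (nat \<Rightarrow> bool)" where
  "bigor S f = (\<lambda>i. \<exists>u\<in>S. f u i)"

definition orv :: "(nat \<Rightarrow> bool) \<Rightarrow> (nat \<Rightarrow> bool) \<Rightarrow> (nat \<Rightarrow> bool)" where
  "orv y z = (\<lambda>i. y i \<or> z i)"

definition covers :: "nat \<Rightarrow> (nat \<Rightarrow> bool) \<Rightarrow> (nat \<Rightarrow> bool) \<Rightarrow> bool" where
  "covers n y z \<longleftrightarrow> (\<forall>i\<in>{1..n}. z i \<longrightarrow> y i)"

end

theory Submission
  imports Defs "HOL-Real_Asymp.Real_Asymp"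
begin


definition wt :: "real \<Rightarrow> bool \<Rightarrow> real" where
  "wt p b = (if b then p else 1 - p)"

definition Ex :: "real \<Rightarrow> 'a set \<Rightarrow> (('a \<Rightarrow> bool) \<Rightarrow> real) \<Rightarrow> real" where
  "Ex p X F = (\<Sum>f\<in>PiE X (\<lambda>_. UNIV). (\<Prod>a\<in>X. wt p (f a)) * F f)"

lemma Ex_empty: "Ex p {} F = F (\<lambda>_. undefined)"
  by (simp add: Ex_def)

lemma Ex_insert:
  assumes "finite X" "a \<notin> X"
  shows "Ex p (insert a X) F = Ex p X (\<lambda>f. (1 - p) * F (f(a := False)) + p * F (f(a := True)))"
proof -
  have inj: "inj_on (\<lambda>(y, g). g(a := y)) ((UNIV::bool set) \<times> PiE X (\<lambda>_. UNIV))"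
    using inj_combinator[OF assms(2), of "\<lambda>_. UNIV"] by simp
  have "Ex p (insert a X) F = (\<Sum>z\<in>(UNIV::bool set) \<times> PiE X (\<lambda>_. UNIV).
          (\<Prod>b\<in>insert a X. wt p (((\<lambda>(y, g). g(a := y)) z) b)) * F ((\<lambda>(y, g). g(a := y)) z))"
    unfolding Ex_def PiE_insert_eq by (subst sum.reindex[OF inj]) (simp add: o_def)
  also have "\<dots> = (\<Sum>y\<in>(UNIV::bool set). \<Sum>g\<in>PiE X (\<lambda>_. UNIV).
          wt p y * (\<Prod>b\<in>X. wt p (g b)) * F (g(a := y)))"
  proof -
    have h: "\<And>y g. (\<Prod>b\<in>insert a X. wt p ((g(a := y)) b)) = wt p y * (\<Prod>b\<in>X. wt p (g b))"
      using assms by (subst prod.insert) (auto intro!: prod.cong)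
    show ?thesis unfolding sum.cartesian_product by (intro sum.cong refl) (auto simp del: fun_upd_apply simp: h)
  qed
  also have "\<dots> = Ex p X (\<lambda>f. (1 - p) * F (f(a := False)) + p * F (f(a := True)))"
    unfolding Ex_def UNIV_bool
    by (simp add: flip: sum.distrib) (intro sum.cong refl, simp add: algebra_simps wt_def)
  finally show ?thesis .
qed

lemma Ex_cong:
  assumes "\<And>f. f \<in> PiE X (\<lambda>_. UNIV) \<Longrightarrow> F f = G f"
  shows "Ex p X F = Ex p X G"
  unfolding Ex_def using assms by (intro sum.cong) auto

lemma Ex_mono:
  assumes "0 \<le> p" "p \<le> 1" "\<And>f. f \<in> PiE X (\<lambda>_. UNIV) \<Longrightarrow> F f \<le> G f"
  shows "Ex p X F \<le> Ex p X G"
  unfolding Ex_def using assms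
  by (intro sum_mono mult_left_mono prod_nonneg) (auto simp: wt_def)

lemma Ex_cmult: "Ex p X (\<lambda>f. c * F f) = c * Ex p X F"
  unfolding Ex_def by (simp add: sum_distrib_left algebra_simps)

lemma Ex_add: "Ex p X (\<lambda>f. F f + G f) = Ex p X F + Ex p X G"
  unfolding Ex_def by (simp add: sum.distrib algebra_simps)

lemma Ex_sum: "Ex p X (\<lambda>f. \<Sum>e\<in>E. F e f) = (\<Sum>e\<in>E. Ex p X (F e))"
  unfolding Ex_def by (simp add: sum_distrib_left sum.swap[of _ E])

lemma Ex_const:
  assumes "finite X"
  shows "Ex p X (\<lambda>_. c) = c"
  using assms
proof (induction X rule: finite_induct)
  case empty then show ?case by (simp add: Ex_empty)
next
  case (insert a X) then show ?case by (simp add: Ex_insert algebra_simps)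
qed

definition merge :: "'a set \<Rightarrow> ('a \<Rightarrow> bool) \<Rightarrow> ('a \<Rightarrow> bool) \<Rightarrow> ('a \<Rightarrow> bool)" where
  "merge Y y r = (\<lambda>z. if z \<in> Y then y z else r z)"

lemma Ex_split:
  assumes "finite R" "finite Y" "R \<inter> Y = {}"
  shows "Ex p (R \<union> Y) F = Ex p R (\<lambda>r. Ex p Y (\<lambda>y. F (merge Y y r)))"
  using assms(2,3)
proof (induction Y arbitrary: F rule: finite_induct)
  case empty
  have "Ex p R F = Ex p R (\<lambda>r. F (merge {} (\<lambda>_. undefined) r))"
    by (simp add: merge_def)
  then show ?case by (simp add: Ex_empty)
next
  case (insert a Y)
  have "Ex p (R \<union> insert a Y) F = Ex p (insert a (R \<union> Y)) F" by simp
  also have "\<dots> = Ex p (R \<union> Y) (\<lambda>f. (1 - p) * F (f(a := False)) + p * F (f(a := True)))"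
    using insert assms(1) by (intro Ex_insert) auto
  also have "\<dots> = Ex p R (\<lambda>r. Ex p Y (\<lambda>y. (1 - p) * F ((merge Y y r)(a := False)) + p * F ((merge Y y r)(a := True))))"
    using insert by (intro insert.IH) auto
  also have "\<dots> = Ex p R (\<lambda>r. Ex p (insert a Y) (\<lambda>y. F (merge (insert a Y) y r)))"
  proof (rule Ex_cong)
    fix r
    have "\<And>y b. merge (insert a Y) (y(a := b)) r = (merge Y y r)(a := b)"
      using insert by (auto simp: merge_def fun_eq_iff)
    then show "Ex p Y (\<lambda>y. (1 - p) * F ((merge Y y r)(a := False)) + p * F ((merge Y y r)(a := True))) =
        Ex p (insert a Y) (\<lambda>y. F (merge (insert a Y) y r))"
      using insert by (simp add: Ex_insert)
  qed
  finally show ?case .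
qed

lemma Ex_indep:
  assumes "finite R" "finite Y" "R \<inter> Y = {}"
    and "\<And>f g. (\<And>z. z \<notin> Y \<Longrightarrow> f z = g z) \<Longrightarrow> F f = F g"
  shows "Ex p (R \<union> Y) F = Ex p R F"
proof -
  have "Ex p (R \<union> Y) F = Ex p R (\<lambda>r. Ex p Y (\<lambda>y. F (merge Y y r)))"
    by (rule Ex_split[OF assms(1-3)])
  also have "\<dots> = Ex p R (\<lambda>r. Ex p Y (\<lambda>y. F r))"
    using assms(3) by (intro Ex_cong assms(4)) (auto simp: merge_def)
  also have "\<dots> = Ex p R F" using assms(2) by (simp add: Ex_const)
  finally show ?thesis .
qed

lemma Ex_or:
  assumes "finite A" "inj_on g A"
  shows "Ex p (g ` A) (\<lambda>y. if \<exists>u\<in>A. y (g u) then 1 else 0) = 1 - (1 - p) ^ card A"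
  using assms
proof (induction A rule: finite_induct)
  case empty then show ?case by (simp add: Ex_empty)
next
  case (insert a A)
  have ga: "g a \<notin> g ` A" using insert by auto
  have inj: "inj_on g A" using insert by (auto simp: inj_on_def)
  have "Ex p (g ` insert a A) (\<lambda>y. if \<exists>u\<in>insert a A. y (g u) then 1 else 0)
     = Ex p (g ` A) (\<lambda>y. (1 - p) * (if \<exists>u\<in>A. y (g u) then 1 else 0) + p * 1)"
  proof -
    have "Ex p (insert (g a) (g ` A)) (\<lambda>y. if \<exists>u\<in>insert a A. y (g u) then 1 else 0)
      = Ex p (g ` A) (\<lambda>f. (1 - p) * (if \<exists>u\<in>insert a A. (f(g a := False)) (g u) then 1 else 0)
            + p * (if \<exists>u\<in>insert a A. (f(g a := True)) (g u) then 1 else 0))"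
      using insert ga by (intro Ex_insert) auto
    also have "\<dots> = Ex p (g ` A) (\<lambda>y. (1 - p) * (if \<exists>u\<in>A. y (g u) then 1 else 0) + p * 1)"
      using ga by (intro Ex_cong) (auto, metis image_eqI)
    finally show ?thesis by simp
  qed
  also have "\<dots> = (1 - p) * (1 - (1 - p) ^ card A) + p"
    using insert inj by (simp add: Ex_add Ex_cmult Ex_const)
  also have "\<dots> = 1 - (1 - p) ^ card (insert a A)"
    using insert by (simp add: algebra_simps)
  finally show ?case by simp
qed




definition Oc :: "nat set \<Rightarrow> (nat \<Rightarrow> nat) \<Rightarrow> nat \<Rightarrow> (nat \<times> nat \<Rightarrow> bool) \<Rightarrow> bool" where
  "Oc S s i c = (\<exists>u\<in>S. s u < i \<and> c (u, i - s u))"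
definition Dc :: "nat \<Rightarrow> nat \<Rightarrow> nat \<Rightarrow> (nat \<times> nat \<Rightarrow> bool) \<Rightarrow> bool" where
  "Dc t d i c = (0 < d \<and> d < i \<and> c (t, i - d))"
definition badpos where
  "badpos t S s d i c = (c (t, i) \<and> \<not> Dc t d i c \<and> \<not> Oc S s i c)"
definition covd where
  "covd t S s d m c = (\<forall>i\<in>{1..m}. \<not> badpos t S s d i c)"
definition fr :: "nat \<Rightarrow> nat \<Rightarrow> nat set" where
  "fr d m = {j\<in>{1..m}. m < j + d}"
definition Wp where
  "Wp \<theta> t S s d m c = (if covd t S s d m c then 1 else 0) * (\<Prod>j\<in>fr d m. if c (t, j) then \<theta> else 1::real)"

lemma covd_Suc: "covd t S s d (Suc m) c = (covd t S s d m c \<and> \<not> badpos t S s d (Suc m) c)"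
  unfolding covd_def using atLeastAtMostSuc_conv[of 1 m] by auto

lemma step:
  fixes X :: "(nat \<times> nat) set"
  assumes fin: "finite X" "finite S" and tS: "t \<notin> S"
    and aX: "(t, Suc m) \<in> X" and gX: "\<forall>u\<in>S. s u \<le> m \<longrightarrow> (u, Suc m - s u) \<in> X"
    and p: "0 \<le> p" "p \<le> 1" and th: "0 \<le> \<theta>"
    and A: "0 < d \<Longrightarrow> (1 - p) + p * \<theta> \<le> (1 - x) * \<theta>"
    and B: "\<forall>k\<le>card S. (1 - p) + p * \<theta> * (1 - (1 - p) ^ k) \<le> 1 - x"
    and C: "d = 0 \<Longrightarrow> \<theta> = 1"
  shows "Ex p X (Wp \<theta> t S s d (Suc m)) \<le> (1 - x) * Ex p X (Wp \<theta> t S s d m)"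
proof -
  define Sm where "Sm = {u\<in>S. s u \<le> m}"
  define g where "g = (\<lambda>u. (u, Suc m - s u))"
  define a where "a = (t, Suc m)"
  define Y' where "Y' = g ` Sm"
  define Y where "Y = insert a Y'"
  define R where "R = X - Y"
  have YX: "Y \<subseteq> X" using aX gX unfolding Y_def Y'_def a_def g_def Sm_def by auto
  have XRY: "X = R \<union> Y" "R \<inter> Y = {}" "finite R" "finite Y"
    using YX fin unfolding R_def by (auto intro: finite_subset)
  have finSm: "finite Sm" using fin unfolding Sm_def by auto
  have finY': "finite Y'" using finSm unfolding Y'_def by auto
  have aY': "a \<notin> Y'" using tS unfolding a_def Y'_def g_def Sm_def by auto
  have injg: "inj_on g Sm" unfolding g_def by (auto simp: inj_on_def)
  have nY1: "(t, i) \<notin> Y" if "i \<le> m" for i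
    using that tS unfolding Y_def Y'_def a_def g_def Sm_def by auto
  have nY2: "(u, i - s u) \<notin> Y" if "u \<in> S" "s u < i" "i \<le> m" for u i
    using that tS unfolding Y_def Y'_def a_def g_def Sm_def by auto
  have agree_bad: "badpos t S s d i f = badpos t S s d i h"
    if "\<And>z. z \<notin> Y \<Longrightarrow> f z = h z" "i \<le> m" for f h i
  proof -
    have "f (t, i) = h (t, i)" using that nY1 by auto
    moreover have "Dc t d i f = Dc t d i h"
      unfolding Dc_def using that nY1[of "i - d"] by auto
    moreover have "Oc S s i f = Oc S s i h"
      unfolding Oc_def using that nY2 by (metis)
    ultimately show ?thesis unfolding badpos_def by simp
  qed
  have agree_cov: "covd t S s d m f = covd t S s d m h"
    if "\<And>z. z \<notin> Y \<Longrightarrow> f z = h z" for f h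
    unfolding covd_def using agree_bad[OF that] by auto
  define F' where "F' = {j\<in>{1..m}. Suc m < j + d}"
  define P where "P f = (\<Prod>j\<in>F'. if f (t, j) then \<theta> else 1::real)" for f
  have finF': "finite F'" unfolding F'_def by auto
  have agreeP: "P f = P h" if "\<And>z. z \<notin> Y \<Longrightarrow> f z = h z" for f h
    unfolding P_def using that nY1 by (intro prod.cong) (auto simp: F'_def)
  have P0: "P f \<ge> 0" for f unfolding P_def using th by (intro prod_nonneg) auto
  have frS: "fr d (Suc m) = (if 0 < d then insert (Suc m) F' else F')"
    unfolding fr_def F'_def by (auto simp: le_Suc_eq)
  have frm: "fr d m = (if 0 < d \<and> d \<le> m then insert (Suc m - d) F' else F')"
    unfolding fr_def F'_def by auto
  have SF': "Suc m \<notin> F'" "Suc m - d \<notin> F'" unfolding F'_def by auto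
  define Dr where "Dr r = (0 < d \<and> d < Suc m \<and> r (t, Suc m - d))" for r
  define Hc where "Hc r y = (if y a then (if Dr r \<or> (\<exists>u\<in>Sm. y (g u)) then \<theta> else 0) else 1)" for r y
  have mergeD: "merge Y y r (t, Suc m - d) = r (t, Suc m - d)" if "0 < d" for y r
    using nY1[of "Suc m - d"] that by (auto simp: merge_def)
  have mergeO: "Oc S s (Suc m) (merge Y y r) = (\<exists>u\<in>Sm. y (g u))" for y r
    using tS unfolding Oc_def merge_def Y_def Y'_def Sm_def g_def a_def by auto
  have W1: "Wp \<theta> t S s d (Suc m) (merge Y y r) = (if covd t S s d m r then 1 else 0) * P r * Hc r y" for y r
  proof -
    have c1: "covd t S s d m (merge Y y r) = covd t S s d m r"
      by (rule agree_cov) (auto simp: merge_def)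
    have p1: "P (merge Y y r) = P r" by (rule agreeP) (auto simp: merge_def)
    have ma: "merge Y y r (t, Suc m) = y a" unfolding merge_def Y_def a_def by simp
    have bp: "badpos t S s d (Suc m) (merge Y y r) = (y a \<and> \<not> Dr r \<and> \<not> (\<exists>u\<in>Sm. y (g u)))"
      unfolding badpos_def Dc_def Dr_def using ma mergeO mergeD by auto
    have prodS: "(\<Prod>j\<in>fr d (Suc m). if merge Y y r (t, j) then \<theta> else 1) =
        P r * (if 0 < d \<and> y a then \<theta> else 1)"
      using SF' finF' ma p1 unfolding frS P_def by (auto)
    show ?thesis
      unfolding Wp_def covd_Suc c1 prodS bp Hc_def using C by auto
  qed
  have W0: "Wp \<theta> t S s d m r = (if covd t S s d m r then 1 else 0) * P r *
      (if Dr r then \<theta> else 1)" for r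
  proof -
    have "(\<Prod>j\<in>fr d m. if r (t, j) then \<theta> else 1) = P r * (if Dr r then \<theta> else 1)"
      using SF' finF' unfolding frm P_def Dr_def by auto
    then show ?thesis unfolding Wp_def by simp
  qed
  have key: "Ex p Y (Hc r) \<le> (1 - x) * (if Dr r then \<theta> else 1)" for r
  proof -
    have "Ex p Y (Hc r) = Ex p Y' (\<lambda>y. (1 - p) * Hc r (y(a := False)) + p * Hc r (y(a := True)))"
      unfolding Y_def using finY' aY' by (rule Ex_insert)
    also have "\<dots> = Ex p Y' (\<lambda>y. (1 - p) + p * (if Dr r then \<theta> else \<theta> * (if \<exists>u\<in>Sm. y (g u) then 1 else 0)))"
    proof (rule Ex_cong)
      fix y
      have "\<And>u. u \<in> Sm \<Longrightarrow> g u \<noteq> a" using aY' unfolding Y'_def by auto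
      then show "(1 - p) * Hc r (y(a := False)) + p * Hc r (y(a := True)) =
          (1 - p) + p * (if Dr r then \<theta> else \<theta> * (if \<exists>u\<in>Sm. y (g u) then 1 else 0))"
        unfolding Hc_def by auto
    qed
    also have "\<dots> = (1 - p) + p * (if Dr r then \<theta> else \<theta> * (1 - (1 - p) ^ card Sm))"
    proof (cases "Dr r")
      case True then show ?thesis using finY' by (simp add: Ex_const)
    next
      case False
      then show ?thesis using finY' finSm injg
        by (simp add: Ex_add Ex_cmult Ex_const Ex_or Y'_def)
    qed
    also have "\<dots> \<le> (1 - x) * (if Dr r then \<theta> else 1)"
    proof (cases "Dr r")
      case True then show ?thesis using A unfolding Dr_def by auto
    next
      case False
      have "card Sm \<le> card S" using fin unfolding Sm_def by (intro card_mono) auto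
      then show ?thesis using False B by (auto simp: algebra_simps)
    qed
    finally show ?thesis .
  qed
  have "Ex p X (Wp \<theta> t S s d (Suc m)) = Ex p R (\<lambda>r. Ex p Y (\<lambda>y. Wp \<theta> t S s d (Suc m) (merge Y y r)))"
    unfolding XRY(1) using XRY by (intro Ex_split) auto
  also have "\<dots> = Ex p R (\<lambda>r. (if covd t S s d m r then 1 else 0) * P r * Ex p Y (Hc r))"
    unfolding W1 by (simp add: Ex_cmult)
  also have "\<dots> \<le> Ex p R (\<lambda>r. (1 - x) * Wp \<theta> t S s d m r)"
  proof (rule Ex_mono[OF p])
    fix r
    have "(if covd t S s d m r then 1 else 0) * P r * Ex p Y (Hc r)
        \<le> (if covd t S s d m r then 1 else 0) * P r * ((1 - x) * (if Dr r then \<theta> else 1))"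
      using key[of r] P0[of r] by (intro mult_left_mono) auto
    then show "(if covd t S s d m r then 1 else 0) * P r * Ex p Y (Hc r) \<le> (1 - x) * Wp \<theta> t S s d m r"
      unfolding W0 by (simp add: algebra_simps)
  qed
  also have "\<dots> = (1 - x) * Ex p R (Wp \<theta> t S s d m)" by (simp add: Ex_cmult)
  also have "Ex p R (Wp \<theta> t S s d m) = Ex p X (Wp \<theta> t S s d m)"
  proof -
    have "Ex p (R \<union> Y) (Wp \<theta> t S s d m) = Ex p R (Wp \<theta> t S s d m)"
    proof (rule Ex_indep)
      fix f h :: "nat \<times> nat \<Rightarrow> bool"
      assume ag: "\<And>z. z \<notin> Y \<Longrightarrow> f z = h z"
      have "Dr f = Dr h" unfolding Dr_def using ag nY1[of "Suc m - d"] by auto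
      then show "Wp \<theta> t S s d m f = Wp \<theta> t S s d m h"
        unfolding W0 using agree_cov[OF ag] agreeP[OF ag] by simp
    qed (use XRY in auto)
    then show ?thesis using XRY by simp
  qed
  finally show ?thesis .
qed




lemma event_bound:
  fixes X :: "(nat \<times> nat) set"
  assumes fin: "finite X" "finite S" and tS: "t \<notin> S"
    and tX: "\<forall>i\<in>{1..n}. (t, i) \<in> X" and uX: "\<forall>u\<in>S. \<forall>i\<in>{1..n}. s u < i \<longrightarrow> (u, i - s u) \<in> X"
    and p: "0 \<le> p" "p \<le> 1" and th: "1 \<le> \<theta>" and x1: "x \<le> 1"
    and A: "0 < d \<Longrightarrow> (1 - p) + p * \<theta> \<le> (1 - x) * \<theta>"
    and B: "\<forall>k\<le>card S. (1 - p) + p * \<theta> * (1 - (1 - p) ^ k) \<le> 1 - x"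
    and C: "d = 0 \<Longrightarrow> \<theta> = 1"
  shows "Ex p X (\<lambda>c. if covd t S s d n c then 1 else 0) \<le> (1 - x) ^ n"
proof -
  have "m \<le> n \<Longrightarrow> Ex p X (Wp \<theta> t S s d m) \<le> (1 - x) ^ m" for m
  proof (induction m)
    case 0
    have "Wp \<theta> t S s d 0 = (\<lambda>_. 1)" by (auto simp: Wp_def covd_def fr_def fun_eq_iff)
    then show ?case using fin by (simp add: Ex_const)
  next
    case (Suc m)
    have "Ex p X (Wp \<theta> t S s d (Suc m)) \<le> (1 - x) * Ex p X (Wp \<theta> t S s d m)"
    proof (rule step)
      show "(t, Suc m) \<in> X" using tX Suc.prems by auto
      show "\<forall>u\<in>S. s u \<le> m \<longrightarrow> (u, Suc m - s u) \<in> X" using uX Suc.prems by auto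
    qed (use fin tS p th A B C in auto)
    also have "\<dots> \<le> (1 - x) * (1 - x) ^ m" using Suc x1 by (intro mult_left_mono) auto
    finally show ?case by simp
  qed
  from this[of n] have "Ex p X (Wp \<theta> t S s d n) \<le> (1 - x) ^ n" by simp
  moreover have "Ex p X (\<lambda>c. if covd t S s d n c then 1 else 0) \<le> Ex p X (Wp \<theta> t S s d n)"
  proof (rule Ex_mono[OF p])
    fix c
    have "1 \<le> (\<Prod>j\<in>fr d n. if c (t, j) then \<theta> else 1::real)"
      using th by (intro prod_ge_1) auto
    then show "(if covd t S s d n c then 1 else 0) \<le> Wp \<theta> t S s d n c"
      unfolding Wp_def by auto
  qed
  ultimately show ?thesis by linarith
qed

lemma covers_I:
  "covers n (bigor S (\<lambda>u. shiftv (s u) (\<lambda>i. c (u, i)))) (\<lambda>i. c (t, i)) = covd t S s 0 n c"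
  unfolding covers_def bigor_def shiftv_def covd_def badpos_def Dc_def Oc_def by auto

lemma covers_S:
  assumes "0 < d"
  shows "covers n (orv (shiftv d (\<lambda>i. c (t, i))) (bigor S (\<lambda>u. shiftv (s u) (\<lambda>i. c (u, i))))) (\<lambda>i. c (t, i))
     = covd t S s d n c"
  using assms unfolding covers_def bigor_def shiftv_def covd_def badpos_def Dc_def Oc_def orv_def by auto

lemma covd_restrict: "covd t S (restrict s S) d n c = covd t S s d n c"
  unfolding covd_def badpos_def Oc_def by auto




lemma param_ineqs:
  fixes p q :: real
  assumes "0 < p" "p < 1" "0 < q" "q \<le> 1"
  defines "x \<equiv> p * (1 - p) * q"
  defines "\<theta> \<equiv> 1 / (1 - p * q)"
  shows "1 \<le> \<theta>" "(1 - p) + p * \<theta> \<le> (1 - x) * \<theta>"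
    "\<And>r. q \<le> r \<Longrightarrow> r \<le> 1 \<Longrightarrow> (1 - p) + p * \<theta> * (1 - r) \<le> 1 - x"
proof -
  have pq0: "0 < p * q" using assms by simp
  have "p * q \<le> p" using assms by (simp add: mult_left_le)
  then have pq1: "p * q < 1" using assms by linarith
  have d0: "0 < 1 - p * q" using pq1 by simp
  show "1 \<le> \<theta>" unfolding \<theta>_def using d0 pq0 by simp
  have e1: "(1 - p) + p * \<theta> = ((1 - p) * (1 - p * q) + p) / (1 - p * q)"
    unfolding \<theta>_def using d0 by (simp add: field_simps)
  have e2: "(1 - x) * \<theta> = (1 - p * (1 - p) * q) / (1 - p * q)"
    unfolding \<theta>_def x_def by simp
  have "(1 - p) * (1 - p * q) + p = 1 - p * (1 - p) * q" by (simp add: algebra_simps)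
  then show "(1 - p) + p * \<theta> \<le> (1 - x) * \<theta>" using e1 e2 by simp
  fix r assume r: "q \<le> r" "r \<le> 1"
  have e3: "(1 - p) + p * \<theta> * (1 - r) = ((1 - p) * (1 - p * q) + p * (1 - r)) / (1 - p * q)"
    unfolding \<theta>_def using d0 by (simp add: field_simps)
  have "p * (1 - r) \<le> p * (1 - q)" using r assms by (intro mult_left_mono) auto
  moreover have "0 \<le> (p * q) * (p * q) * (1 - p)" using assms by auto
  ultimately have "(1 - p) * (1 - p * q) + p * (1 - r) \<le> (1 - x) * (1 - p * q)"
    unfolding x_def by (simp add: algebra_simps)
  then show "(1 - p) + p * \<theta> * (1 - r) \<le> 1 - x"
    unfolding e3 using d0 by (simp add: divide_le_eq)
qed




lemma card_subsets_eq_le: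
  assumes "finite A"
  shows "card {S. S \<subseteq> A \<and> card S = k} \<le> card A ^ k"
proof -
  have "{S. S \<subseteq> A \<and> card S = k} \<subseteq> (\<lambda>f. f ` {..<k}) ` (PiE {..<k} (\<lambda>_. A))"
  proof
    fix S assume S: "S \<in> {S. S \<subseteq> A \<and> card S = k}"
    then have fS: "finite S" using assms finite_subset by auto
    obtain h where h: "bij_betw h {0..<card S} S" using ex_bij_betw_nat_finite[OF fS] by blast
    have "restrict h {..<k} \<in> PiE {..<k} (\<lambda>_. A)" using h S
      by (auto simp: bij_betw_def lessThan_atLeast0)
    moreover have "restrict h {..<k} ` {..<k} = S" using h S
      by (auto simp: bij_betw_def lessThan_atLeast0)
    ultimately show "S \<in> (\<lambda>f. f ` {..<k}) ` (PiE {..<k} (\<lambda>_. A))" by (metis image_eqI)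
  qed
  then have "card {S. S \<subseteq> A \<and> card S = k} \<le> card ((\<lambda>f. f ` {..<k}) ` (PiE {..<k} (\<lambda>_. A)))"
    using assms by (intro card_mono finite_imageI finite_PiE) auto
  also have "\<dots> \<le> card (PiE {..<k} (\<lambda>_. A))" using assms by (intro card_image_le finite_PiE) auto
  also have "\<dots> = card A ^ k" by (simp add: card_PiE)
  finally show ?thesis .
qed

lemma card_subsets_le:
  assumes "finite A"
  shows "card {S. S \<subseteq> A \<and> card S \<le> M} \<le> (M + 1) * (card A + 1) ^ M"
proof -
  have "{S. S \<subseteq> A \<and> card S \<le> M} = (\<Union>k\<in>{..M}. {S. S \<subseteq> A \<and> card S = k})" by auto
  then have "card {S. S \<subseteq> A \<and> card S \<le> M} \<le> (\<Sum>k\<in>{..M}. card {S. S \<subseteq> A \<and> card S = k})"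
    by (simp add: card_UN_le)
  also have "\<dots> \<le> (\<Sum>k\<in>{..M}. (card A + 1) ^ M)"
  proof (rule sum_mono)
    fix k assume k: "k \<in> {..M}"
    have "card {S. S \<subseteq> A \<and> card S = k} \<le> card A ^ k" by (rule card_subsets_eq_le[OF assms])
    also have "\<dots> \<le> (card A + 1) ^ k" by (intro power_mono) auto
    also have "\<dots> \<le> (card A + 1) ^ M" using k by (intro power_increasing) auto
    finally show "card {S. S \<subseteq> A \<and> card S = k} \<le> (card A + 1) ^ M" .
  qed
  also have "\<dots> = (M + 1) * (card A + 1) ^ M" by simp
  finally show ?thesis .
qed

definition SS :: "nat set \<Rightarrow> nat \<Rightarrow> nat \<Rightarrow> (nat set \<times> (nat \<Rightarrow> nat)) set" where
  "SS A M n = Sigma {S. S \<subseteq> A \<and> card S \<le> M} (\<lambda>S. PiE S (\<lambda>_. {..<n}))"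

lemma finite_SS: "finite A \<Longrightarrow> finite (SS A M n)"
  unfolding SS_def by (intro finite_SigmaI finite_PiE) (auto intro: finite_subset)

lemma card_SS:
  assumes "finite A" "1 \<le> n"
  shows "card (SS A M n) \<le> (M + 1) * (card A + 1) ^ M * n ^ M"
proof -
  have fin: "finite {S. S \<subseteq> A \<and> card S \<le> M}" using assms by auto
  have "card (SS A M n) = (\<Sum>S\<in>{S. S \<subseteq> A \<and> card S \<le> M}. card (PiE S (\<lambda>_. {..<n})))"
    unfolding SS_def using fin assms by (subst card_SigmaI) (auto intro!: finite_PiE intro: finite_subset)
  also have "\<dots> \<le> (\<Sum>S\<in>{S. S \<subseteq> A \<and> card S \<le> M}. n ^ M)"
  proof (rule sum_mono)
    fix S assume S: "S \<in> {S. S \<subseteq> A \<and> card S \<le> M}"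
    then have "finite S" using assms finite_subset by auto
    then have "card (PiE S (\<lambda>_. {..<n})) = n ^ card S" by (simp add: card_PiE)
    also have "\<dots> \<le> n ^ M" using S assms by (intro power_increasing) auto
    finally show "card (PiE S (\<lambda>_. {..<n})) \<le> n ^ M" .
  qed
  also have "\<dots> = card {S. S \<subseteq> A \<and> card S \<le> M} * n ^ M" by simp
  also have "\<dots> \<le> (M + 1) * (card A + 1) ^ M * n ^ M"
    using card_subsets_le[OF assms(1), of M] by (intro mult_right_mono) auto
  finally show ?thesis .
qed

lemma SS_mono: "M \<le> M' \<Longrightarrow> SS A M n \<subseteq> SS A M' n"
  unfolding SS_def by auto




lemma xe_bound:
  fixes M :: nat assumes "M \<ge> 1"
  shows "1 \<le> (1 / (real M + 1)) * (1 - 1 / (real M + 1)) ^ M * exp 1 * (real M + 1)"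
proof -
  have M0: "real M > 0" using assms by simp
  have "(1 + 1 / real M) \<le> exp (1 / real M)" by (rule exp_ge_add_one_self[of "1/real M", simplified add.commute])
  then have "(1 + 1 / real M) ^ M \<le> exp (1 / real M) ^ M" using M0 by (intro power_mono) auto
  also have "\<dots> = exp 1" using M0 by (simp add: exp_of_nat_mult[symmetric])
  finally have a: "(1 + 1 / real M) ^ M \<le> exp 1" .
  have b: "1 - 1 / (real M + 1) = 1 / (1 + 1 / real M)" using M0 by (simp add: field_simps)
  define aa where "aa = (1 + 1 / real M) ^ M"
  have c: "(1 - 1 / (real M + 1)) ^ M = 1 / aa" unfolding b aa_def by (simp add: power_one_over)
  have pos: "0 < aa" unfolding aa_def using M0 by (intro zero_less_power add_pos_pos) auto
  have e1: "(1 / (real M + 1)) * (1 - 1 / (real M + 1)) ^ M * exp 1 * (real M + 1)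
      = ((1 / (real M + 1)) * (real M + 1)) * (exp 1 * (1 / aa))"
    unfolding c by (simp only: mult_ac)
  have e2: "((1 / (real M + 1)) * (real M + 1)) * (exp 1 * (1 / aa)) = exp 1 / aa"
    by simp
  have e3: "exp 1 / aa \<ge> 1" using a pos unfolding aa_def[symmetric] by simp
  show ?thesis using e1 e2 e3 by simp
qed

lemma asym:
  fixes M :: nat and \<delta> :: real
  assumes M1: "M \<ge> 1" and d0: "\<delta> > 0"
  defines "x \<equiv> (1 / (real M + 1)) * (1 - 1 / (real M + 1)) ^ M"
  shows "\<exists>T0::nat. \<forall>T\<ge>T0. 2 \<le> T \<and>
    2 * (real M + 1) * (real T + 1) ^ (M + 1) *
      real (nat \<lceil>(1 + \<delta>) * exp 1 * ln 2 * (real M + 1)^2 * log 2 (real T)\<rceil>) ^ (M + 1) *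
      (1 - x) ^ (nat \<lceil>(1 + \<delta>) * exp 1 * ln 2 * (real M + 1)^2 * log 2 (real T)\<rceil>) < 1"
proof -
  define K where "K = 2 * (real M + 1)"
  have K4: "K \<ge> 4" unfolding K_def using M1 by simp
  have ev: "eventually (\<lambda>T::real. (1+\<delta>)*exp 1*(real M+1)^2*ln T + 1 \<le> T powr \<delta> / (2 * (2 * (real M + 1)))) at_top"
    using d0 by real_asymp
  then obtain T1 where T1: "\<And>T. T \<ge> T1 \<Longrightarrow> (1+\<delta>)*exp 1*(real M+1)^2*ln T + 1 \<le> T powr \<delta> / (2 * K)"
    unfolding K_def eventually_at_top_linorder by blast
  have p01: "0 \<le> 1 / (real M + 1)" "1 / (real M + 1) \<le> 1" "0 \<le> 1 - 1 / (real M + 1)" "1 - 1 / (real M + 1) \<le> 1"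
    by (auto simp: field_simps)
  have c1a: "(1 - 1 / (real M + 1)) ^ M \<le> 1" by (rule power_le_one) (use p01 in auto)
  have c1b: "0 \<le> (1 - 1 / (real M + 1)) ^ M" by (rule zero_le_power) (use p01 in auto)
  have x0: "0 \<le> x" "x \<le> 1" unfolding x_def
    subgoal using p01 c1b by simp
    subgoal by (rule mult_le_one) (use p01 c1a c1b in auto)
    done
  have xe: "1 \<le> x * exp 1 * (real M + 1)" unfolding x_def using xe_bound[OF M1] by simp
  show ?thesis
  proof (intro exI[of _ "max 2 (nat \<lceil>T1\<rceil>)"] allI impI conjI)
    fix T :: nat assume T: "max 2 (nat \<lceil>T1\<rceil>) \<le> T"
    then show T2: "2 \<le> T" by simp
    have TT1: "real T \<ge> T1" using T by linarith
    define L where "L = (1+\<delta>)*exp 1*(real M+1)^2*ln (real T)"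
    have Lrw: "(1 + \<delta>) * exp 1 * ln 2 * (real M + 1)^2 * log 2 (real T) = L"
      unfolding L_def log_def by (simp add: field_simps)
    define n where "n = nat \<lceil>L\<rceil>"
    have lnT: "ln (real T) > 0" using T2 by simp
    have L0: "L \<ge> 0" unfolding L_def using lnT d0 by (intro mult_nonneg_nonneg) auto
    have nL: "L \<le> real n" "real n \<le> L + 1" unfolding n_def using L0 by linarith+
    have Tpos: "real T > 0" using T2 by simp
    have "(1 - x) ^ n \<le> exp (- x) ^ n"
      using x0 by (intro power_mono) (auto simp: exp_ge_add_one_self[of "-x", simplified])
    also have "\<dots> = exp (- x * real n)" by (simp add: exp_of_nat_mult[symmetric] mult.commute)
    also have "\<dots> \<le> exp (- ((1 + \<delta>) * (real M + 1) * ln (real T)))"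
    proof -
      have "x * L = (x * exp 1 * (real M + 1)) * ((1 + \<delta>) * (real M + 1) * ln (real T))"
        unfolding L_def by (simp add: algebra_simps power2_eq_square)
      also have "\<dots> \<ge> 1 * ((1 + \<delta>) * (real M + 1) * ln (real T))"
        using xe lnT d0 by (intro mult_right_mono) auto
      finally have "x * L \<ge> (1 + \<delta>) * (real M + 1) * ln (real T)" by simp
      moreover have "x * L \<le> x * real n" using nL x0 by (intro mult_left_mono) auto
      ultimately show ?thesis by simp
    qed
    also have "\<dots> = (real T powr (- (1 + \<delta>))) ^ (M + 1)"
    proof -
      have "(real T powr (- (1 + \<delta>))) ^ (M + 1) = exp (- (1 + \<delta>) * ln (real T)) ^ (M + 1)"
        using Tpos by (simp add: powr_def)
      also have "\<dots> = exp (real (M + 1) * (- (1 + \<delta>) * ln (real T)))" by (rule exp_of_nat_mult[symmetric])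
      also have "\<dots> = exp (- ((1 + \<delta>) * (real M + 1) * ln (real T)))"
        by (intro arg_cong[where f=exp]) (simp add: algebra_simps)
      finally show ?thesis by (rule sym)
    qed
    finally have ex: "(1 - x) ^ n \<le> (real T powr (- (1 + \<delta>))) ^ (M + 1)" .
    define z where "z = (real T + 1) * real n * real T powr (- (1 + \<delta>))"
    have z0: "z \<ge> 0" unfolding z_def by simp
    have "z = ((real T + 1) / real T) * real n * real T powr (- \<delta>)"
      unfolding z_def using Tpos by (simp add: powr_diff powr_minus field_simps powr_add)
    also have "\<dots> \<le> 2 * real n * real T powr (- \<delta>)"
      using Tpos T2 by (intro mult_right_mono) (auto simp: field_simps)
    also have "\<dots> \<le> 2 * (real T powr \<delta> / (2 * K)) * real T powr (- \<delta>)"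
      using nL T1[OF TT1] unfolding L_def by (intro mult_right_mono mult_left_mono) auto
    also have "\<dots> = 1 / K" using Tpos K4 by (simp add: powr_minus field_simps)
    finally have zK: "z \<le> 1 / K" .
    have "K * (real T + 1) ^ (M + 1) * real n ^ (M + 1) * (1 - x) ^ n
        \<le> K * (real T + 1) ^ (M + 1) * real n ^ (M + 1) * (real T powr (- (1 + \<delta>))) ^ (M + 1)"
      using ex K4 by (intro mult_left_mono) auto
    also have "\<dots> = K * z ^ (M + 1)" unfolding z_def by (simp add: power_mult_distrib)
    also have "\<dots> \<le> K * (1 / K) ^ (M + 1)" using zK z0 K4 by (intro mult_left_mono power_mono) auto
    also have "\<dots> = (1 / K) ^ M" using K4 by (simp add: field_simps)
    also have "\<dots> \<le> (1 / K) ^ 1" using K4 M1 by (intro power_decreasing) auto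
    also have "\<dots> = 1 / K" by simp
    also have "\<dots> < 1" using K4 by simp
    finally show "2 * (real M + 1) * (real T + 1) ^ (M + 1) *
      real (nat \<lceil>(1 + \<delta>) * exp 1 * ln 2 * (real M + 1)^2 * log 2 (real T)\<rceil>) ^ (M + 1) *
      (1 - x) ^ (nat \<lceil>(1 + \<delta>) * exp 1 * ln 2 * (real M + 1)^2 * log 2 (real T)\<rceil>) < 1"
      unfolding Lrw n_def[symmetric] K_def[symmetric] .
  qed
qed


theorem theorem2:
  fixes M :: nat and \<delta> :: real
  assumes "M \<ge> 1" and "\<delta> > 0"
  shows "\<exists>T0::nat. \<forall>T\<ge>T0.
    (let n = nat \<lceil>(1 + \<delta>) * exp 1 * ln 2 * (real M + 1)^2 * log 2 (real T)\<rceil> in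
     \<exists>c :: nat \<Rightarrow> (nat \<Rightarrow> bool).
       (\<forall>t\<in>{1..T}. \<forall>S \<subseteq> {1..T} - {t}. card S \<le> M \<longrightarrow>
          (\<forall>s :: nat \<Rightarrow> nat. (\<forall>u\<in>S. s u < n) \<longrightarrow>
             \<not> covers n (bigor S (\<lambda>u. shiftv (s u) (c u))) (c t))) \<and>
       (\<forall>t\<in>{1..T}. \<forall>d\<in>{1..n-1}. \<forall>S \<subseteq> {1..T} - {t}. card S \<le> M - 1 \<longrightarrow>
          (\<forall>s :: nat \<Rightarrow> nat. (\<forall>u\<in>S. s u < n) \<longrightarrow>
             \<not> covers n (orv (shiftv d (c t)) (bigor S (\<lambda>u. shiftv (s u) (c u)))) (c t))))"
proof -
  note M1 = assms(1) and d0 = assms(2)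
  define p where "p = 1 / (real M + 1)"
  define x where "x = (1 / (real M + 1)) * (1 - 1 / (real M + 1)) ^ M"
  define q where "q = (1 - p) ^ (M - 1)"
  define \<theta> where "\<theta> = 1 / (1 - p * q)"
  have p0: "0 < p" "p < 1" unfolding p_def using M1 by (auto simp: field_simps)
  have q0: "0 < q" "q \<le> 1" unfolding q_def using p0 by (auto intro: power_le_one)
  have xpM: "x = p * (1 - p) ^ M" unfolding x_def p_def by simp
  have x_eq: "x = p * (1 - p) * q"
  proof -
    have "(1 - p) ^ M = (1 - p) * (1 - p) ^ (M - 1)" using M1 by (metis Suc_diff_1 less_le_trans zero_less_one power_Suc)
    then show ?thesis unfolding xpM q_def by simp
  qed
  note PI = param_ineqs[OF p0 q0, folded x_eq, folded \<theta>_def]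
  have x01: "x \<le> 1" using xpM p0 by (simp add: mult_le_one power_le_one)
  obtain T0 where T0: "\<And>T. T \<ge> T0 \<Longrightarrow> 2 \<le> T \<and>
    2 * (real M + 1) * (real T + 1) ^ (M + 1) *
      real (nat \<lceil>(1 + \<delta>) * exp 1 * ln 2 * (real M + 1)^2 * log 2 (real T)\<rceil>) ^ (M + 1) *
      (1 - x) ^ (nat \<lceil>(1 + \<delta>) * exp 1 * ln 2 * (real M + 1)^2 * log 2 (real T)\<rceil>) < 1"
    using asym[OF M1 d0] unfolding x_def by blast
  show ?thesis
  proof (intro exI[of _ T0] allI impI)
    fix T :: nat assume "T \<ge> T0"
    note TT = T0[OF this]
    define n where "n = nat \<lceil>(1 + \<delta>) * exp 1 * ln 2 * (real M + 1)^2 * log 2 (real T)\<rceil>"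
    have T2: "2 \<le> T" using TT by simp
    have bnd: "2 * (real M + 1) * (real T + 1) ^ (M + 1) * real n ^ (M + 1) * (1 - x) ^ n < 1"
      using TT unfolding n_def by simp
    have n1: "1 \<le> n"
    proof -
      have "log 2 (real T) > 0" using T2 by simp
      then have "(1 + \<delta>) * exp 1 * ln 2 * (real M + 1)^2 * log 2 (real T) > 0" using d0 by simp
      then show ?thesis unfolding n_def by linarith
    qed
    define X where "X = {1..T} \<times> {1..n}"
    have finX: "finite X" unfolding X_def by simp
    define EvI where "EvI = Sigma {1..T} (\<lambda>t. SS ({1..T} - {t}) M n)"
    define EvS where "EvS = Sigma {1..T} (\<lambda>t. {1..n-1} \<times> SS ({1..T} - {t}) (M - 1) n)"
    define fI where "fI e c = (if covd (fst e) (fst (snd e)) (snd (snd e)) 0 n c then 1 else 0::real)"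
      for e :: "nat \<times> nat set \<times> (nat \<Rightarrow> nat)" and c
    define fS where "fS e c = (if covd (fst e) (fst (snd (snd e))) (snd (snd (snd e))) (fst (snd e)) n c then 1 else 0::real)"
      for e :: "nat \<times> nat \<times> nat set \<times> (nat \<Rightarrow> nat)" and c
    define bad where "bad c = ((\<exists>e\<in>EvI. fI e c = 1) \<or> (\<exists>e\<in>EvS. fS e c = 1))" for c
    have finEvI: "finite EvI" unfolding EvI_def by (intro finite_SigmaI finite_SS) auto
    have finEvS: "finite EvS" unfolding EvS_def by (intro finite_SigmaI finite_cartesian_product finite_SS) auto
    have pp: "0 \<le> p" "p \<le> 1" using p0 by auto
    have evI: "Ex p X (fI e) \<le> (1 - x) ^ n" if e: "e \<in> EvI" for e
    proof -
      obtain t S s where e': "e = (t, S, s)" by (metis prod.exhaust)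
      have t: "t \<in> {1..T}" and S: "S \<subseteq> {1..T} - {t}" "card S \<le> M" and s: "s \<in> PiE S (\<lambda>_. {..<n})"
        using e unfolding e' EvI_def SS_def by auto
      have finS: "finite S" using S finite_subset by blast
      have "Ex p X (\<lambda>c. if covd t S s 0 n c then 1 else 0) \<le> (1 - x) ^ n"
      proof (rule event_bound[OF finX finS, where \<theta>=1])
        show "t \<notin> S" using S by auto
        show "\<forall>i\<in>{1..n}. (t, i) \<in> X" using t unfolding X_def by auto
        show "\<forall>u\<in>S. \<forall>i\<in>{1..n}. s u < i \<longrightarrow> (u, i - s u) \<in> X" using S unfolding X_def by auto
        show "\<forall>k\<le>card S. 1 - p + p * 1 * (1 - (1 - p) ^ k) \<le> 1 - x"
        proof (intro allI impI)
          fix k assume "k \<le> card S"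
          then have "k \<le> M" using S by simp
          then have "(1 - p) ^ M \<le> (1 - p) ^ k" using p0 by (intro power_decreasing) auto
          then have "p * (1 - p) ^ M \<le> p * (1 - p) ^ k" using p0 by (intro mult_left_mono) auto
          then show "1 - p + p * 1 * (1 - (1 - p) ^ k) \<le> 1 - x" unfolding xpM by (simp add: algebra_simps)
        qed
      qed (use pp x01 in auto)
      then show ?thesis unfolding fI_def e' by simp
    qed
    have evS: "Ex p X (fS e) \<le> (1 - x) ^ n" if e: "e \<in> EvS" for e
    proof -
      obtain t d S s where e': "e = (t, d, S, s)" by (metis prod.exhaust)
      have t: "t \<in> {1..T}" and d: "d \<in> {1..n-1}" and S: "S \<subseteq> {1..T} - {t}" "card S \<le> M - 1"
        and s: "s \<in> PiE S (\<lambda>_. {..<n})"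
        using e unfolding e' EvS_def SS_def by auto
      have finS: "finite S" using S finite_subset by blast
      have "Ex p X (\<lambda>c. if covd t S s d n c then 1 else 0) \<le> (1 - x) ^ n"
      proof (rule event_bound[OF finX finS, where \<theta>=\<theta>])
        show "t \<notin> S" using S by auto
        show "\<forall>i\<in>{1..n}. (t, i) \<in> X" using t unfolding X_def by auto
        show "\<forall>u\<in>S. \<forall>i\<in>{1..n}. s u < i \<longrightarrow> (u, i - s u) \<in> X" using S unfolding X_def by auto
        show "\<forall>k\<le>card S. 1 - p + p * \<theta> * (1 - (1 - p) ^ k) \<le> 1 - x"
        proof (intro allI impI)
          fix k assume "k \<le> card S"
          then have "k \<le> M - 1" using S by simp
          then have "q \<le> (1 - p) ^ k" unfolding q_def using p0 by (intro power_decreasing) auto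
          moreover have "(1 - p) ^ k \<le> 1" using p0 by (intro power_le_one) auto
          ultimately show "1 - p + p * \<theta> * (1 - (1 - p) ^ k) \<le> 1 - x" using PI(3) by blast
        qed
        show "0 < d \<Longrightarrow> 1 - p + p * \<theta> \<le> (1 - x) * \<theta>" using PI(2) by simp
        show "d = 0 \<Longrightarrow> \<theta> = 1" using d by simp
      qed (use pp x01 PI(1) in auto)
      then show ?thesis unfolding fS_def e' by simp
    qed
    have cardEvI: "card EvI \<le> T * ((M + 1) * (T + 1) ^ M * n ^ M)"
    proof -
      have "card EvI = (\<Sum>t\<in>{1..T}. card (SS ({1..T} - {t}) M n))"
        unfolding EvI_def by (subst card_SigmaI) (auto intro: finite_SS)
      also have "\<dots> \<le> (\<Sum>t\<in>{1..T}. (M + 1) * (T + 1) ^ M * n ^ M)"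
      proof (rule sum_mono)
        fix t assume "t \<in> {1..T}"
        have "card (SS ({1..T} - {t}) M n) \<le> (M + 1) * (card ({1..T} - {t}) + 1) ^ M * n ^ M"
          using n1 by (intro card_SS) auto
        also have "\<dots> \<le> (M + 1) * (T + 1) ^ M * n ^ M"
          by (intro mult_right_mono mult_left_mono power_mono) (use card_Diff1_le[of "{1..T}" t] in auto)
        finally show "card (SS ({1..T} - {t}) M n) \<le> (M + 1) * (T + 1) ^ M * n ^ M" .
      qed
      also have "\<dots> = T * ((M + 1) * (T + 1) ^ M * n ^ M)" by simp
      finally show ?thesis .
    qed
    have cardEvS: "card EvS \<le> T * (n * ((M + 1) * (T + 1) ^ M * n ^ M))"
    proof -
      have "card EvS = (\<Sum>t\<in>{1..T}. card ({1..n-1} \<times> SS ({1..T} - {t}) (M - 1) n))"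
        unfolding EvS_def by (subst card_SigmaI) (auto intro: finite_SS)
      also have "\<dots> \<le> (\<Sum>t\<in>{1..T}. n * ((M + 1) * (T + 1) ^ M * n ^ M))"
      proof (rule sum_mono)
        fix t assume "t \<in> {1..T}"
        have "card (SS ({1..T} - {t}) (M - 1) n) \<le> card (SS ({1..T} - {t}) M n)"
          by (intro card_mono finite_SS SS_mono) auto
        also have "\<dots> \<le> (M + 1) * (card ({1..T} - {t}) + 1) ^ M * n ^ M"
          using n1 by (intro card_SS) auto
        also have "\<dots> \<le> (M + 1) * (T + 1) ^ M * n ^ M"
          by (intro mult_right_mono mult_left_mono power_mono) (use card_Diff1_le[of "{1..T}" t] in auto)
        finally have "card (SS ({1..T} - {t}) (M - 1) n) \<le> (M + 1) * (T + 1) ^ M * n ^ M" .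
        then show "card ({1..n-1} \<times> SS ({1..T} - {t}) (M - 1) n) \<le> n * ((M + 1) * (T + 1) ^ M * n ^ M)"
          by (simp add: card_cartesian_product) (intro mult_mono; auto)
      qed
      also have "\<dots> = T * (n * ((M + 1) * (T + 1) ^ M * n ^ M))" by simp
      finally show ?thesis .
    qed
    have cardTot: "real (card EvI) + real (card EvS) \<le> 2 * (real M + 1) * (real T + 1) ^ (M + 1) * real n ^ (M + 1)"
    proof -
      have "card EvI + card EvS \<le> T * ((M + 1) * (T + 1) ^ M * n ^ M) + T * (n * ((M + 1) * (T + 1) ^ M * n ^ M))"
        using cardEvI cardEvS by linarith
      also have "\<dots> \<le> 2 * (M + 1) * (T + 1) ^ (M + 1) * n ^ (M + 1)"
      proof -
        have a: "n ^ M \<le> n ^ (M + 1)" using n1 by (intro power_increasing) auto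
        have b: "T * (T + 1) ^ M \<le> (T + 1) ^ (M + 1)" by simp
        have "T * ((M + 1) * (T + 1) ^ M * n ^ M) \<le> (M + 1) * (T + 1) ^ (M + 1) * n ^ (M + 1)"
        proof -
          have "T * ((M + 1) * (T + 1) ^ M * n ^ M) = (M + 1) * (T * (T + 1) ^ M) * n ^ M" by (simp only: mult_ac)
          also have "\<dots> \<le> (M + 1) * (T + 1) ^ (M + 1) * n ^ (M + 1)"
            using a b by (intro mult_mono) auto
          finally show ?thesis .
        qed
        moreover have "T * (n * ((M + 1) * (T + 1) ^ M * n ^ M)) = (M + 1) * (T * (T + 1) ^ M) * n ^ (M + 1)"
          by (simp add: algebra_simps)
        moreover have "(M + 1) * (T * (T + 1) ^ M) * n ^ (M + 1) \<le> (M + 1) * (T + 1) ^ (M + 1) * n ^ (M + 1)"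
          using b by (intro mult_right_mono mult_left_mono) auto
        ultimately show ?thesis by linarith
      qed
      finally have "card EvI + card EvS \<le> 2 * (M + 1) * (T + 1) ^ (M + 1) * n ^ (M + 1)" .
      then have "real (card EvI + card EvS) \<le> real (2 * (M + 1) * (T + 1) ^ (M + 1) * n ^ (M + 1))"
        by (simp only: of_nat_le_iff)
      then show ?thesis by (simp only: of_nat_add of_nat_mult of_nat_power of_nat_1 of_nat_numeral)
    qed
    have x1: "0 \<le> 1 - x" using x01 by simp
    have "Ex p X (\<lambda>c. if bad c then 1 else 0) \<le> Ex p X (\<lambda>c. (\<Sum>e\<in>EvI. fI e c) + (\<Sum>e\<in>EvS. fS e c))"
    proof (rule Ex_mono[OF pp])
      fix c
      have nnI: "0 \<le> (\<Sum>e\<in>EvI. fI e c)" by (intro sum_nonneg) (auto simp: fI_def)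
      have nnS: "0 \<le> (\<Sum>e\<in>EvS. fS e c)" by (intro sum_nonneg) (auto simp: fS_def)
      show "(if bad c then 1 else 0) \<le> (\<Sum>e\<in>EvI. fI e c) + (\<Sum>e\<in>EvS. fS e c)"
      proof (cases "bad c")
        case True
        then have "(\<exists>e\<in>EvI. fI e c = 1) \<or> (\<exists>e\<in>EvS. fS e c = 1)" unfolding bad_def .
        then have "1 \<le> (\<Sum>e\<in>EvI. fI e c) + (\<Sum>e\<in>EvS. fS e c)"
        proof (elim disjE bexE)
          fix e assume "e \<in> EvI" "fI e c = 1"
          then have "1 \<le> (\<Sum>e\<in>EvI. fI e c)"
            using member_le_sum[of e EvI "\<lambda>e. fI e c"] finEvI by (auto simp: fI_def)
          then show ?thesis using nnS by simp
        next
          fix e assume "e \<in> EvS" "fS e c = 1"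
          then have "1 \<le> (\<Sum>e\<in>EvS. fS e c)"
            using member_le_sum[of e EvS "\<lambda>e. fS e c"] finEvS by (auto simp: fS_def)
          then show ?thesis using nnI by simp
        qed
        then show ?thesis using True by simp
      qed (use nnI nnS in simp)
    qed
    also have "\<dots> = (\<Sum>e\<in>EvI. Ex p X (fI e)) + (\<Sum>e\<in>EvS. Ex p X (fS e))"
      by (simp add: Ex_add Ex_sum)
    also have "\<dots> \<le> real (card EvI) * (1 - x) ^ n + real (card EvS) * (1 - x) ^ n"
      using evI evS by (intro add_mono sum_bounded_above) auto
    also have "\<dots> = (real (card EvI) + real (card EvS)) * (1 - x) ^ n" by (simp add: algebra_simps)
    also have "\<dots> \<le> 2 * (real M + 1) * (real T + 1) ^ (M + 1) * real n ^ (M + 1) * (1 - x) ^ n"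
      using cardTot x1 by (intro mult_right_mono) auto
    also have "\<dots> < 1" by (rule bnd)
    finally have lt1: "Ex p X (\<lambda>c. if bad c then 1 else 0) < 1" .
    have "\<exists>c0. \<not> bad c0"
    proof (rule ccontr)
      assume "\<not> (\<exists>c0. \<not> bad c0)"
      then have "Ex p X (\<lambda>c. if bad c then 1 else 0) = Ex p X (\<lambda>_. 1)" by (intro Ex_cong) auto
      then show False using lt1 finX by (simp add: Ex_const)
    qed
    then obtain c0 where c0: "\<not> bad c0" by blast
    define c where "c = (\<lambda>u i. c0 (u, i))"
    show "let n = nat \<lceil>(1 + \<delta>) * exp 1 * ln 2 * (real M + 1)^2 * log 2 (real T)\<rceil> in
     \<exists>c :: nat \<Rightarrow> (nat \<Rightarrow> bool).
       (\<forall>t\<in>{1..T}. \<forall>S \<subseteq> {1..T} - {t}. card S \<le> M \<longrightarrow>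
          (\<forall>s :: nat \<Rightarrow> nat. (\<forall>u\<in>S. s u < n) \<longrightarrow>
             \<not> covers n (bigor S (\<lambda>u. shiftv (s u) (c u))) (c t))) \<and>
       (\<forall>t\<in>{1..T}. \<forall>d\<in>{1..n-1}. \<forall>S \<subseteq> {1..T} - {t}. card S \<le> M - 1 \<longrightarrow>
          (\<forall>s :: nat \<Rightarrow> nat. (\<forall>u\<in>S. s u < n) \<longrightarrow>
             \<not> covers n (orv (shiftv d (c t)) (bigor S (\<lambda>u. shiftv (s u) (c u)))) (c t)))"
      unfolding Let_def n_def[symmetric]
    proof (intro exI[of _ c] conjI ballI allI impI)
      fix t S s
      assume t: "t \<in> {1..T}" and S: "S \<subseteq> {1..T} - {t}" "card S \<le> M" and s: "\<forall>u\<in>S. s u < n"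
      have "(t, S, restrict s S) \<in> EvI" unfolding EvI_def SS_def using t S s by auto
      then have "\<not> covd t S (restrict s S) 0 n c0" using c0 unfolding bad_def fI_def by force
      then have "\<not> covd t S s 0 n c0" by (simp add: covd_restrict)
      then show "\<not> covers n (bigor S (\<lambda>u. shiftv (s u) (c u))) (c t)"
        unfolding c_def covers_I .
    next
      fix t d S s
      assume t: "t \<in> {1..T}" and d: "d \<in> {1..n-1}" and S: "S \<subseteq> {1..T} - {t}" "card S \<le> M - 1"
        and s: "\<forall>u\<in>S. s u < n"
      have "(t, d, S, restrict s S) \<in> EvS" unfolding EvS_def SS_def using t d S s by auto
      then have "\<not> covd t S (restrict s S) d n c0" using c0 unfolding bad_def fS_def by force
      then have "\<not> covd t S s d n c0" by (simp add: covd_restrict)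
      moreover have "0 < d" using d by simp
      ultimately show "\<not> covers n (orv (shiftv d (c t)) (bigor S (\<lambda>u. shiftv (s u) (c u)))) (c t)"
        unfolding c_def using covers_S by metis
    qed
  qed
qed

end
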